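(* Let $q\ge2$, $A\in\mathbb{R}_{\geq0}^{q\times q}$, and let $V$ be the value of the one-shot two-player zero-sum game defined by $A$. Then there exists a randomized algorithm $R$ without advice for the repeated matrix game with cost matrix $A$ such that $\mathbb{E}[R(\sigma)]\leq Vn$ for every input $\sigma$ of length $n$. Furthermore, there exists a deterministic algorithm $\mathrm{ALG}$ reading $\lceil\log_2 q\rceil$ bits of advice such that $\mathrm{ALG}(\sigma)\leq Vn$ for every input $\sigma$ of length $n$.
   Context: The one-shot game defined by $A$: the row player picks $x\in[q]$, the column player picks $y\in[q]$, and the column player pays $A(x,y)$; $V=\max_\mu\min_\nu\mathbb{E}_{x\sim\mu,y\sim\nu}A(x,y)$ over mixed strategies. The repeated matrix game with cost matrix $A$: inputs $\sigma=(n,x_1,\dots,x_n)$ with $x_i\in[q]$; in round $i$ the algorithm learns $n$ (if $i=1$) or $x_{i-1}$ (if $i>1$) and answers $y_i\in[q]$ depending only on $n,x_1,\dots,x_{i-1}$ (and advice/randomness); cost $\sum_{i}A(x_i,y_i)$; $n$ is called the length. Advice is read from an infinite tape prepared by an oracle knowing the whole input. *)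

theory Defs
  imports "HOL-Probability.Probability"
begin

text \<open>Actions are the elements of [q], represented as the naturals 0, ..., q-1.
  A cost matrix is a function nat => nat => real (only entries below q matter).\<close>

definition mixed_strategies :: "nat \<Rightarrow> (nat \<Rightarrow> real) set" where
  "mixed_strategies q = {p. (\<forall>x<q. 0 \<le> p x) \<and> (\<Sum>x<q. p x) = 1}"

definition game_payoff :: "nat \<Rightarrow> (nat \<Rightarrow> nat \<Rightarrow> real) \<Rightarrow> (nat \<Rightarrow> real) \<Rightarrow> (nat \<Rightarrow> real) \<Rightarrow> real" where
  "game_payoff q A \<mu> \<nu> = (\<Sum>x<q. \<Sum>y<q. \<mu> x * \<nu> y * A x y)"

definition game_value :: "nat \<Rightarrow> (nat \<Rightarrow> nat \<Rightarrow> real) \<Rightarrow> real" where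
  "game_value q A = (SUP \<mu>\<in>mixed_strategies q. INF \<nu>\<in>mixed_strategies q. game_payoff q A \<mu> \<nu>)"

text \<open>A deterministic online algorithm: given the length n and the prefix [x_1,...,x_{i-1}],
  it answers y_i.\<close>
type_synonym det_alg = "nat \<Rightarrow> nat list \<Rightarrow> nat"

definition valid_alg :: "nat \<Rightarrow> det_alg \<Rightarrow> bool" where
  "valid_alg q alg \<longleftrightarrow> (\<forall>n pre. alg n pre < q)"

definition valid_input :: "nat \<Rightarrow> nat list \<Rightarrow> bool" where
  "valid_input q xs \<longleftrightarrow> (\<forall>x\<in>set xs. x < q)"

definition alg_cost :: "(nat \<Rightarrow> nat \<Rightarrow> real) \<Rightarrow> det_alg \<Rightarrow> nat list \<Rightarrow> real" where
  "alg_cost A alg xs = (\<Sum>i<length xs. A (xs ! i) (alg (length xs) (take i xs)))"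

text \<open>A deterministic algorithm with advice reads an infinite advice tape (nat => bool);
  it reads at most b bits if its behaviour depends only on the first b bits of the tape.\<close>
type_synonym advice_alg = "(nat \<Rightarrow> bool) \<Rightarrow> det_alg"

definition reads_at_most :: "nat \<Rightarrow> advice_alg \<Rightarrow> bool" where
  "reads_at_most b alg \<longleftrightarrow> (\<forall>t t'. (\<forall>j<b. t j = t' j) \<longrightarrow> alg t = alg t')"

end

theory Submission
  imports Defs
begin

lemma coord_cont [continuous_intros]: "continuous_on S (\<lambda>x::nat\<Rightarrow>real. x i)"
  by (rule continuous_on_subset[OF continuous_on_product_coordinates]) simp

definition KK :: "nat \<Rightarrow> (nat \<Rightarrow> real) set" where
  "KK q = {f. (\<forall>i. f i \<in> (if i<q then {0..1} else {0})) \<and> (\<Sum>i<q. f i) = 1}"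

lemma compact_KK: "compact (KK q)"
proof -
  let ?S = "\<lambda>i::nat. if i<q then {0..1::real} else {0}"
  have "compactin (product_topology (\<lambda>i. euclidean) UNIV) (PiE UNIV ?S)"
    by (subst compactin_PiE) auto
  hence c: "compact (PiE UNIV ?S)" by (simp add: euclidean_product_topology)
  have cl: "closed {f::nat\<Rightarrow>real. (\<Sum>i<q. f i) = 1}"
    by (intro closed_Collect_eq continuous_intros)
  have "KK q = PiE UNIV ?S \<inter> {f. (\<Sum>i<q. f i) = 1}"
    unfolding KK_def by (auto simp: PiE_iff split: if_splits; metis)
  thus ?thesis using c cl by auto
qed

lemma hsq: "(max 0 (b::real))^2 \<le> (max 0 a + (b - a))^2"
  by (cases "b \<le> 0"; cases "a \<le> 0") (auto simp: power2_eq_square intro: mult_mono)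

definition row :: "nat \<Rightarrow> (nat \<Rightarrow> nat \<Rightarrow> real) \<Rightarrow> (nat \<Rightarrow> real) \<Rightarrow> nat \<Rightarrow> real" where
  "row q A \<nu> x = (\<Sum>y<q. \<nu> y * A x y)"

lemma payoff_row: "game_payoff q A \<mu> \<nu> = (\<Sum>x<q. \<mu> x * row q A \<nu> x)"
  unfolding game_payoff_def row_def by (simp add: sum_distrib_left mult.assoc)

lemma mixed_le1: "\<mu> \<in> mixed_strategies q \<Longrightarrow> x < q \<Longrightarrow> \<mu> x \<le> 1"
proof -
  assume m: "\<mu> \<in> mixed_strategies q" and x: "x < q"
  have "\<mu> x \<le> (\<Sum>y<q. \<mu> y)"
    using m x unfolding mixed_strategies_def by (intro member_le_sum) auto
  thus ?thesis using m unfolding mixed_strategies_def by simp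
qed

lemma delta0: "0 < (q::nat) \<Longrightarrow> (\<Sum>y<q. (if y = 0 then 1 else 0) * f y) = (f 0::real)"
proof -
  assume "0 < q"
  have "(\<Sum>y<q. (if y = 0 then 1 else 0) * f y) = (\<Sum>y<q. if y = 0 then f y else 0)"
    by (intro sum.cong) auto
  also have "\<dots> = f 0" using \<open>0 < q\<close> by simp
  finally show ?thesis .
qed

lemma KK_mixed: "KK q \<subseteq> mixed_strategies q"
  unfolding KK_def mixed_strategies_def by auto

lemma minimax:
  fixes q :: nat and A :: "nat \<Rightarrow> nat \<Rightarrow> real"
  assumes q: "q \<ge> 1" and Anonneg: "\<forall>x<q. \<forall>y<q. 0 \<le> A x y"
  shows "\<exists>\<nu>\<in>KK q. \<forall>x<q. row q A \<nu> x \<le> game_value q A"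
proof -
  define V where "V = game_value q A"
  define M where "M = mixed_strategies q"
  define e0 :: "nat \<Rightarrow> real" where "e0 = (\<lambda>i. if i = 0 then 1 else 0)"
  have e0K: "e0 \<in> KK q" using q unfolding KK_def e0_def by auto
  hence e0M: "e0 \<in> M" using KK_mixed M_def by auto
  have rownn: "\<nu> \<in> M \<Longrightarrow> x < q \<Longrightarrow> 0 \<le> row q A \<nu> x" for \<nu> x
    unfolding row_def M_def mixed_strategies_def using Anonneg by (auto intro!: sum_nonneg)
  have paynn: "\<mu> \<in> M \<Longrightarrow> \<nu> \<in> M \<Longrightarrow> 0 \<le> game_payoff q A \<mu> \<nu>" for \<mu> \<nu>
    unfolding payoff_row using rownn by (auto intro!: sum_nonneg simp: M_def mixed_strategies_def)
  have bddB: "\<mu> \<in> M \<Longrightarrow> bdd_below ((\<lambda>\<nu>. game_payoff q A \<mu> \<nu>) ` M)" for \<mu>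
    using paynn by (auto intro!: bdd_belowI[where m=0])
  have bddA: "bdd_above ((\<lambda>\<mu>. INF \<nu>\<in>M. game_payoff q A \<mu> \<nu>) ` M)"
  proof (rule bdd_aboveI[where M="\<Sum>x<q. A x 0"], clarify)
    fix \<mu> assume mu: "\<mu> \<in> M"
    have "(INF \<nu>\<in>M. game_payoff q A \<mu> \<nu>) \<le> game_payoff q A \<mu> e0"
      by (rule cINF_lower[OF bddB[OF mu] e0M])
    also have "\<dots> = (\<Sum>x<q. \<mu> x * A x 0)"
      unfolding payoff_row row_def e0_def using q delta0[of q] by simp
    also have "\<dots> \<le> (\<Sum>x<q. A x 0)"
    proof (rule sum_mono)
      fix x assume "x \<in> {..<q}"
      then show "\<mu> x * A x 0 \<le> A x 0"
        using mu mixed_le1[of \<mu> q x] Anonneg q unfolding M_def mixed_strategies_def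
        by (intro mult_left_le_one_le) auto
    qed
    finally show "(INF \<nu>\<in>M. game_payoff q A \<mu> \<nu>) \<le> (\<Sum>x<q. A x 0)" .
  qed
  have Vge: "\<mu> \<in> M \<Longrightarrow> (INF \<nu>\<in>M. game_payoff q A \<mu> \<nu>) \<le> V" for \<mu>
    unfolding V_def game_value_def M_def[symmetric] by (rule cSUP_upper[OF _ bddA])
  define g where "g \<nu> = (\<Sum>x<q. (max 0 (row q A \<nu> x - V))^2)" for \<nu>
  have "continuous_on (KK q) g"
    unfolding g_def row_def by (intro continuous_intros)
  then obtain \<nu>0 where n0K: "\<nu>0 \<in> KK q" and n0min: "\<And>\<nu>. \<nu> \<in> KK q \<Longrightarrow> g \<nu>0 \<le> g \<nu>"
    using continuous_attains_inf[OF compact_KK, of q g] e0K by blast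
  show ?thesis
  proof (rule ccontr)
    assume "\<not> ?thesis"
    then obtain x0 where x0: "x0 < q" "row q A \<nu>0 x0 > V" using n0K V_def by auto
    define p where "p x = max 0 (row q A \<nu>0 x - V)" for x
    define P where "P = (\<Sum>x<q. p x)"
    define Sq where "Sq = (\<Sum>x<q. (p x)^2)"
    have pnn: "0 \<le> p x" for x unfolding p_def by simp
    have px0: "p x0 > 0" using x0 unfolding p_def by simp
    have "p x0 \<le> P" unfolding P_def using x0 pnn by (intro member_le_sum) auto
    hence Ppos: "P > 0" using px0 by linarith
    have "(p x0)^2 \<le> Sq" unfolding Sq_def using x0 by (intro member_le_sum) auto
    hence Sqpos: "Sq > 0" using px0 by (smt (verit) zero_less_power)
    have gSq: "g \<nu>0 = Sq" unfolding g_def Sq_def p_def ..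
    define \<mu> where "\<mu> x = p x / P" for x
    have muM: "\<mu> \<in> M"
      unfolding M_def mixed_strategies_def \<mu>_def using pnn Ppos
      by (auto simp: sum_divide_distrib[symmetric] P_def)
    define \<epsilon> where "\<epsilon> = Sq / (2 * P)"
    have epos: "\<epsilon> > 0" unfolding \<epsilon>_def using Sqpos Ppos by simp
    have "(INF \<nu>\<in>M. game_payoff q A \<mu> \<nu>) < V + \<epsilon>" using Vge[OF muM] epos by linarith
    then obtain \<nu>1 where n1M: "\<nu>1 \<in> M" and n1: "game_payoff q A \<mu> \<nu>1 < V + \<epsilon>"
      using cINF_less_iff[OF _ bddB[OF muM]] e0M by blast
    define \<nu>2 where "\<nu>2 y = (if y < q then \<nu>1 y else 0)" for y
    have n2K: "\<nu>2 \<in> KK q"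
    proof -
      have "\<forall>i. \<nu>2 i \<in> (if i<q then {0..1} else {0})"
        using n1M mixed_le1[of \<nu>1 q] unfolding \<nu>2_def M_def mixed_strategies_def by auto
      moreover have "(\<Sum>i<q. \<nu>2 i) = 1"
        using n1M unfolding \<nu>2_def M_def mixed_strategies_def by simp
      ultimately show ?thesis unfolding KK_def by simp
    qed
    have row21: "row q A \<nu>2 x = row q A \<nu>1 x" for x
      unfolding row_def \<nu>2_def by (intro sum.cong) auto
    define d where "d x = row q A \<nu>2 x - row q A \<nu>0 x" for x
    define s where "s = (\<Sum>x<q. p x * d x)"
    have e1: "(\<Sum>x<q. p x * row q A \<nu>2 x) = P * game_payoff q A \<mu> \<nu>1"
      unfolding payoff_row sum_distrib_left row21[symmetric] \<mu>_def using Ppos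
      by (intro sum.cong) auto
    have e2: "(\<Sum>x<q. p x * row q A \<nu>0 x) = Sq + V * P"
    proof -
      have "p x * row q A \<nu>0 x = (p x)^2 + V * p x" for x
        unfolding p_def by (auto simp: max_def power2_eq_square algebra_simps)
      thus ?thesis unfolding Sq_def P_def by (simp add: sum.distrib sum_distrib_left)
    qed
    have "s = (\<Sum>x<q. p x * row q A \<nu>2 x) - (\<Sum>x<q. p x * row q A \<nu>0 x)"
      unfolding s_def d_def by (simp add: algebra_simps sum_subtractf)
    also have "\<dots> = P * game_payoff q A \<mu> \<nu>1 - Sq - V * P" using e1 e2 by simp
    also have "\<dots> < P * (V + \<epsilon>) - Sq - V * P" using n1 Ppos by simp
    also have "\<dots> = - Sq / 2" unfolding \<epsilon>_def using Ppos by (simp add: field_simps)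
    finally have sneg: "s < - Sq / 2" .
    define D where "D = (\<Sum>x<q. (d x)^2)"
    have Dnn: "D \<ge> 0" unfolding D_def by (simp add: sum_nonneg)
    define t where "t = min 1 (- s / (D + 1))"
    have tpos: "t > 0" unfolding t_def using sneg Sqpos Dnn by (simp add: field_simps)
    have tle: "t \<le> 1" unfolding t_def by simp
    have tD: "t * D < - s"
    proof -
      have "t * D \<le> (- s / (D + 1)) * D" unfolding t_def using Dnn
        by (intro mult_right_mono) auto
      also have "\<dots> < - s" using Dnn sneg Sqpos by (simp add: field_simps)
      finally show ?thesis .
    qed
    define \<nu>3 where "\<nu>3 y = (1 - t) * \<nu>0 y + t * \<nu>2 y" for y
    have n3K: "\<nu>3 \<in> KK q"
    proof -
      have a: "\<forall>i. \<nu>0 i \<in> (if i<q then {0..1} else {0})" "(\<Sum>i<q. \<nu>0 i) = 1"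
        using n0K unfolding KK_def by auto
      have b: "\<forall>i. \<nu>2 i \<in> (if i<q then {0..1} else {0})" "(\<Sum>i<q. \<nu>2 i) = 1"
        using n2K unfolding KK_def by auto
      have "\<forall>i. \<nu>3 i \<in> (if i<q then {0..1} else {0})"
      proof
        fix i
        show "\<nu>3 i \<in> (if i<q then {0..1} else {0})"
        proof (cases "i < q")
          case True
          then have "0 \<le> \<nu>0 i" "\<nu>0 i \<le> 1" "0 \<le> \<nu>2 i" "\<nu>2 i \<le> 1" using a(1) b(1) by (metis atLeastAtMost_iff)+
          then have "0 \<le> \<nu>3 i" "\<nu>3 i \<le> 1" unfolding \<nu>3_def using tpos tle
            by (auto intro!: add_nonneg_nonneg mult_nonneg_nonneg convex_bound_le[where a=1, simplified])
          then show ?thesis using True by simp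
        next
          case False
          then show ?thesis using a(1) b(1) unfolding \<nu>3_def by (metis singletonD mult_zero_right add_0 singletonI)
        qed
      qed
      moreover have "(\<Sum>i<q. \<nu>3 i) = 1"
        unfolding \<nu>3_def using a(2) b(2) by (simp add: sum.distrib sum_distrib_left[symmetric])
      ultimately show ?thesis unfolding KK_def by simp
    qed
    have row3: "row q A \<nu>3 x = row q A \<nu>0 x + t * d x" for x
      unfolding row_def \<nu>3_def d_def
      by (simp add: algebra_simps sum.distrib sum_distrib_left sum_subtractf)
    have "g \<nu>3 \<le> (\<Sum>x<q. (p x + t * d x)^2)"
      unfolding g_def
    proof (rule sum_mono)
      fix x
      show "(max 0 (row q A \<nu>3 x - V))\<^sup>2 \<le> (p x + t * d x)\<^sup>2"
        using hsq[of "row q A \<nu>3 x - V" "row q A \<nu>0 x - V"] unfolding p_def row3 by simp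
    qed
    also have "\<dots> = Sq + 2 * t * s + t^2 * D"
      unfolding Sq_def s_def D_def
      by (simp add: power2_eq_square algebra_simps sum.distrib sum_distrib_left)
    also have "\<dots> < Sq"
    proof -
      have "t * (2 * s + t * D) < 0"
        using tpos tD sneg Sqpos by (intro mult_pos_neg) auto
      thus ?thesis by (simp add: power2_eq_square algebra_simps)
    qed
    finally have "g \<nu>3 < g \<nu>0" using gSq by simp
    thus False using n0min[OF n3K] by simp
  qed
qed

lemma KK_props: "\<nu> \<in> KK q \<Longrightarrow> (\<forall>y. 0 \<le> \<nu> y) \<and> (\<forall>y. q \<le> y \<longrightarrow> \<nu> y = 0) \<and> (\<Sum>y<q. \<nu> y) = 1"
  unfolding KK_def by (auto split: if_splits; metis atLeastAtMost_iff linorder_not_le singletonD)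

lemma pow_ge_q:
  assumes "q \<ge> (2::nat)"
  shows "q \<le> 2 ^ nat \<lceil>log 2 (real q)\<rceil>"
proof -
  have "real q = 2 powr (log 2 (real q))" using assms by simp
  also have "\<dots> \<le> 2 powr (real (nat \<lceil>log 2 (real q)\<rceil>))"
    by (intro powr_mono) (auto, linarith)
  also have "\<dots> = real (2 ^ nat \<lceil>log 2 (real q)\<rceil>)"
    by (simp add: powr_realpow)
  finally show ?thesis by linarith
qed

theorem theorem8:
  fixes q :: nat and A :: "nat \<Rightarrow> nat \<Rightarrow> real"
  assumes "q \<ge> 2"
    and "\<forall>x<q. \<forall>y<q. 0 \<le> A x y"
  shows "(\<exists>R :: det_alg pmf.
            (\<forall>alg\<in>set_pmf R. valid_alg q alg) \<and>
            (\<forall>xs. valid_input q xs \<longrightarrow>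
               measure_pmf.expectation R (\<lambda>alg. alg_cost A alg xs)
                 \<le> game_value q A * real (length xs)))
       \<and> (\<exists>ALG :: advice_alg.
            (\<forall>t. valid_alg q (ALG t)) \<and>
            reads_at_most (nat \<lceil>log 2 (real q)\<rceil>) ALG \<and>
            (\<forall>xs. valid_input q xs \<longrightarrow>
               (\<exists>t. alg_cost A (ALG t) xs \<le> game_value q A * real (length xs))))"
proof -
  define V where "V = game_value q A"
  obtain \<nu> where nK: "\<nu> \<in> KK q" and nrow: "\<forall>x<q. row q A \<nu> x \<le> V"
    using minimax[of q A] assms V_def by auto
  have nnn: "\<And>y. 0 \<le> \<nu> y" and nz: "\<And>y. q \<le> y \<Longrightarrow> \<nu> y = 0" and nsum: "(\<Sum>y<q. \<nu> y) = 1"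
    using KK_props[OF nK] by auto
  define S where "S xs y = (\<Sum>i<length xs. A (xs ! i) y)" for xs y
  have avg: "(\<Sum>y<q. \<nu> y * S xs y) \<le> V * real (length xs)" if vi: "valid_input q xs" for xs
  proof -
    have "(\<Sum>y<q. \<nu> y * S xs y) = (\<Sum>i<length xs. row q A \<nu> (xs ! i))"
      unfolding S_def row_def by (simp add: sum_distrib_left sum.swap[of _ "{..<q}"])
    also have "\<dots> \<le> (\<Sum>i<length xs. V)"
      using vi nrow unfolding valid_input_def by (intro sum_mono) auto
    finally show ?thesis by (simp add: mult.commute)
  qed
  have nint: "(\<integral>\<^sup>+y. ennreal (\<nu> y) \<partial>count_space UNIV) = 1"
  proof -
    have "(\<integral>\<^sup>+y. ennreal (\<nu> y) \<partial>count_space UNIV) = (\<Sum>y<q. ennreal (\<nu> y))"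
      by (rule nn_integral_count_space') (auto simp: nz)
    also have "\<dots> = 1" using nnn nsum by simp
    finally show ?thesis .
  qed
  define P :: "nat pmf" where "P = embed_pmf \<nu>"
  have pmfP: "pmf P y = \<nu> y" for y unfolding P_def using pmf_embed_pmf[of \<nu>] nnn nint by blast
  have setP: "set_pmf P \<subseteq> {..<q}"
    unfolding set_pmf_eq pmfP using nz by (auto simp: not_less[symmetric])
  define R :: "det_alg pmf" where "R = map_pmf (\<lambda>y n pre. y) P"
  have part1: "(\<forall>alg\<in>set_pmf R. valid_alg q alg) \<and>
            (\<forall>xs. valid_input q xs \<longrightarrow>
               measure_pmf.expectation R (\<lambda>alg. alg_cost A alg xs)
                 \<le> game_value q A * real (length xs))"
  proof (intro conjI allI impI ballI)
    fix alg assume "alg \<in> set_pmf R"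
    then show "valid_alg q alg" using setP unfolding R_def valid_alg_def by auto
  next
    fix xs assume vi: "valid_input q xs"
    have "measure_pmf.expectation R (\<lambda>alg. alg_cost A alg xs) = measure_pmf.expectation P (S xs)"
      unfolding R_def alg_cost_def S_def by simp
    also have "\<dots> = (\<Sum>y<q. pmf P y *\<^sub>R S xs y)"
      by (rule integral_measure_pmf) (use setP in auto)
    also have "\<dots> = (\<Sum>y<q. \<nu> y * S xs y)" by (simp add: pmfP)
    also have "\<dots> \<le> game_value q A * real (length xs)" using avg[OF vi] V_def by simp
    finally show "measure_pmf.expectation R (\<lambda>alg. alg_cost A alg xs) \<le> game_value q A * real (length xs)" .
  qed
  define b where "b = nat \<lceil>log 2 (real q)\<rceil>"
  define dec :: "(nat \<Rightarrow> bool) \<Rightarrow> nat" where "dec t = horner_sum of_bool 2 (map t [0..<b])" for t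
  define ALG :: advice_alg where "ALG t = (\<lambda>n pre. if dec t < q then dec t else 0)" for t
  have part2: "(\<forall>t. valid_alg q (ALG t)) \<and>
            reads_at_most (nat \<lceil>log 2 (real q)\<rceil>) ALG \<and>
            (\<forall>xs. valid_input q xs \<longrightarrow>
               (\<exists>t. alg_cost A (ALG t) xs \<le> game_value q A * real (length xs)))"
  proof (intro conjI allI impI)
    fix t show "valid_alg q (ALG t)" using assms(1) unfolding valid_alg_def ALG_def by auto
  next
    show "reads_at_most (nat \<lceil>log 2 (real q)\<rceil>) ALG"
      unfolding reads_at_most_def b_def[symmetric]
    proof (intro allI impI)
      fix t t' :: "nat \<Rightarrow> bool" assume "\<forall>j<b. t j = t' j"
      then have m: "map t [0..<b] = map t' [0..<b]" by (intro map_cong) auto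
      have "dec t = dec t'" unfolding dec_def m ..
      then show "ALG t = ALG t'" unfolding ALG_def by simp
    qed
  next
    fix xs assume vi: "valid_input q xs"
    have "finite (S xs ` {..<q})" "S xs ` {..<q} \<noteq> {}" using assms(1) by (auto simp: lessThan_empty_iff)
    from ex_min_if_finite[OF this] obtain y0 where y0: "y0 < q" "\<And>y. y < q \<Longrightarrow> S xs y0 \<le> S xs y"
      by (auto simp: not_less)
    have "S xs y0 = (\<Sum>y<q. \<nu> y * S xs y0)" using nsum by (simp add: sum_distrib_right[symmetric])
    also have "\<dots> \<le> (\<Sum>y<q. \<nu> y * S xs y)"
      using y0 nnn by (intro sum_mono mult_left_mono) auto
    also have "\<dots> \<le> V * real (length xs)" by (rule avg[OF vi])
    finally have Sy0: "S xs y0 \<le> V * real (length xs)" .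
    define t where "t = bit y0"
    have "dec t = take_bit b y0" unfolding dec_def t_def by (rule horner_sum_bit_eq_take_bit)
    also have "\<dots> = y0"
      using y0(1) pow_ge_q[OF assms(1)] unfolding b_def by (simp add: take_bit_nat_eq_self_iff)
    finally have "dec t = y0" .
    hence "alg_cost A (ALG t) xs = S xs y0"
      unfolding alg_cost_def ALG_def S_def using y0(1) by simp
    thus "\<exists>t. alg_cost A (ALG t) xs \<le> game_value q A * real (length xs)"
      using Sy0 V_def by (intro exI[of _ t]) simp
  qed
  show ?thesis using part1 part2 by blast
qed

end
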